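(* Let $q=p^n$ ($p$ any prime), $k\ge1$, $r=\gcd(k,q-1)$, $s=\gcd(k,q+1)$. Then, viewing $D_k$ as a map ${\mathbb F}_q\to{\mathbb F}_q$, $D_k({\mathbb F}_q)=\langle\mu_{(q-1)/r}\rangle\cup\langle\mu_{(q+1)/s}\rangle$.
   Context: $D_k\in\mathbb Z[x]$: $D_0=2$, $D_1=x$, $D_{k+2}=xD_{k+1}-D_k$ (so $D_k(u+1/u)=u^k+u^{-k}$). For $d$ not divisible by $p$, $\mu_d=\{a\in\overline{{\mathbb F}}_p^\times:a^d=1\}$ and $\langle\mu_d\rangle=\{a+1/a:a\in\mu_d\}$. *)

theory Defs
  imports "HOL-Computational_Algebra.Polynomial"
begin

fun dickson :: "nat \<Rightarrow> int poly" where
  "dickson 0 = [:2:]"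
| "dickson (Suc 0) = [:0, 1:]"
| "dickson (Suc (Suc k)) = [:0, 1:] * dickson (Suc k) - dickson k"

definition mu :: "nat \<Rightarrow> 'a::field set" where
  "mu d = {a. a \<noteq> 0 \<and> a ^ d = 1}"

definition mu_sym :: "nat \<Rightarrow> 'a::field set" where
  "mu_sym d = (\<lambda>a. a + inverse a) ` mu d"

text \<open>The subfield F_q of the ambient field, as the set of roots of x^q - x.\<close>
definition Fq :: "nat \<Rightarrow> 'a::field set" where
  "Fq q = {x. x ^ q = x}"

end

theory Submission
  imports Defs "HOL-Computational_Algebra.Primes" "HOL-Number_Theory.Cong"
begin

lemma map_poly_of_int_diff:
  "map_poly (of_int :: int \<Rightarrow> 'a::comm_ring_1) (p - q) = map_poly of_int p - map_poly of_int q"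
  by (rule poly_eqI) (simp add: coeff_map_poly)

lemma map_poly_of_int_x:
  "map_poly (of_int :: int \<Rightarrow> 'a::comm_ring_1) ([:0, 1:] * p) = [:0, 1:] * map_poly of_int p"
  by (simp add: map_poly_pCons)

lemma dickson_eval:
  fixes u :: "'a::field"
  assumes "u \<noteq> 0"
  shows "poly (map_poly (of_int :: int \<Rightarrow> 'a) (dickson k)) (u + inverse u) = u ^ k + inverse u ^ k"
proof (induction k rule: dickson.induct)
  case 1
  have "map_poly (of_int :: int \<Rightarrow> 'a) [:2:] = [:2:]" by (simp add: map_poly_pCons)
  then show ?case by simp
next
  case 2
  have "map_poly (of_int :: int \<Rightarrow> 'a) [:0, 1:] = [:0, 1:]" by (simp add: map_poly_pCons)
  then show ?case by simp
next
  case (3 k)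
  have "poly (map_poly (of_int :: int \<Rightarrow> 'a) (dickson (Suc (Suc k)))) (u + inverse u)
      = (u + inverse u) * poly (map_poly (of_int :: int \<Rightarrow> 'a) (dickson (Suc k))) (u + inverse u)
        - poly (map_poly (of_int :: int \<Rightarrow> 'a) (dickson k)) (u + inverse u)"
    by (simp only: dickson.simps map_poly_of_int_diff map_poly_of_int_x) simp
  also have "\<dots> = u ^ Suc (Suc k) + inverse u ^ Suc (Suc k)"
    using 3 assms by (simp add: field_simps)
  finally show ?case .
qed

lemma pow_mod_eq:
  fixes w :: "'a::comm_monoid_mult"
  assumes "w ^ m = 1"
  shows "w ^ j = w ^ (j mod m)"
proof -
  have "w ^ j = w ^ (m * (j div m) + j mod m)" by (metis mult_div_mod_eq)
  also have "\<dots> = (w ^ m) ^ (j div m) * w ^ (j mod m)" by (simp only: power_add power_mult)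
  finally show ?thesis using assms by simp
qed

lemma root_lemma:
  fixes w :: "'a::alg_closed_field"
  assumes m: "m > 0" and k: "k > 0" and w: "w ^ (m div gcd k m) = 1"
  shows "\<exists>u. u ^ m = 1 \<and> u ^ k = w"
proof -
  define g where "g = gcd k m"
  have g0: "g > 0" using k by (simp add: g_def)
  obtain k' where k': "k = g * k'" unfolding g_def by (metis gcd_dvd1 dvdE)
  obtain m' where m': "m = g * m'" unfolding g_def by (metis gcd_dvd2 dvdE)
  have md: "m div g = m'" using m' g0 by simp
  have cop: "coprime k' m'"
    using k' m' g0 unfolding g_def
    by (metis gcd_mult_left_right_cancel gcd_mult_left_left_cancel coprime_iff_gcd_eq_1 gcd_mult_distrib_nat mult.right_neutral nat_mult_eq_cancel1)
  obtain a where a: "[k' * a = 1] (mod m')" using cong_solve_coprime_nat[OF cop] by (auto simp: One_nat_def)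
  have wm: "w ^ m' = 1" using w md unfolding g_def by simp
  define v where "v = w ^ a"
  have "v ^ k' = w ^ (k' * a)" by (simp add: v_def power_mult mult.commute)
  also have "\<dots> = w ^ ((k' * a) mod m')" by (rule pow_mod_eq[OF wm])
  also have "\<dots> = w ^ (1 mod m')" using a by (simp add: cong_def)
  also have "\<dots> = w" using wm by (cases "m' = 1") simp_all
  finally have vk: "v ^ k' = w" .
  obtain u where u: "u ^ g = v" using alg_closed_field_class.nth_root_exists[OF g0] by blast
  have "u ^ k = w" using u vk k' by (simp add: power_mult)
  moreover have "u ^ m = 1"
  proof -
    have "u ^ m = v ^ m'" using u m' by (simp add: power_mult)
    also have "\<dots> = (w ^ m') ^ a" by (simp add: v_def flip: power_mult) (simp add: mult.commute power_mult)
    finally show ?thesis using wm by simp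
  qed
  ultimately show ?thesis by blast
qed

lemma quad_root:
  fixes x :: "'a::alg_closed_field"
  shows "\<exists>u. u \<noteq> 0 \<and> x = u + inverse u"
proof -
  have "degree [:1, -x, 1:] > 0" by simp
  then obtain u where u: "poly [:1, -x, 1:] (u::'a) = 0" using alg_closed_imp_poly_has_root by blast
  hence eq: "1 + u * u - u * x = 0" by (simp add: algebra_simps)
  have u0: "u \<noteq> 0" using eq by auto
  have e1: "u * x = u * u + 1" using eq by (simp add: algebra_simps)
  have e2: "u * (u + inverse u) = u * u + 1" using u0 by (simp add: distrib_left)
  have "x = u + inverse u" using e1 e2 u0 by (metis mult_left_cancel)
  thus ?thesis using u0 by blast
qed

lemma sym_cases:
  fixes u U :: "'a::field"
  assumes "u \<noteq> 0" "U \<noteq> 0" "U + inverse U = u + inverse u"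
  shows "U = u \<or> U * u = 1"
proof -
  have "(U + inverse U) * (U * u) = (u + inverse u) * (U * u)" using assms(3) by simp
  hence h: "U * (U * u) + inverse U * (U * u) = u * (U * u) + inverse u * (U * u)" by (simp only: distrib_right)
  have f1: "inverse U * (U * u) = u" using assms(2) by (simp add: mult.assoc[symmetric])
  have f2: "inverse u * (U * u) = U" using assms(1) by (simp add: mult.assoc[symmetric] mult.commute[of _ U])
  have "U * (U * u) + u = u * (U * u) + U" using h unfolding f1 f2 .
  hence "U * U * u + u = u * u * U + U" by (simp add: mult_ac)
  hence "(U - u) * (U * u - 1) = 0" by (simp add: algebra_simps)
  thus ?thesis by auto
qed

theorem proposition2p4:
  fixes p n k q r s :: nat
  assumes "prime p"
    and "CHAR('a::alg_closed_field) = p"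
    and "n \<ge> 1"
    and "q = p ^ n"
    and "k \<ge> 1"
    and "r = gcd k (q - 1)"
    and "s = gcd k (q + 1)"
  shows "(\<lambda>x. poly (map_poly (of_int :: int \<Rightarrow> 'a) (dickson k)) x) ` Fq q
           = mu_sym ((q - 1) div r) \<union> mu_sym ((q + 1) div s)"
proof -
  let ?P = "\<lambda>x. poly (map_poly (of_int :: int \<Rightarrow> 'a) (dickson k)) x"
  have pc: "prime CHAR('a)" using assms(1,2) by simp
  have qc: "q = CHAR('a) ^ n" using assms(2,4) by simp
  have frob: "(a + b) ^ q = a ^ q + b ^ q" for a b :: 'a
    by (rule freshmans_dream'[OF pc qc])
  have p2: "p \<ge> 2" using assms(1) by (rule prime_ge_2_nat)
  have "p ^ 1 \<le> p ^ n" using p2 assms(3) by (intro power_increasing) auto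
  hence q2: "q \<ge> 2" using p2 assms(4) by simp
  have fq: "(u + inverse u) ^ q = u ^ q + inverse (u ^ q)" for u :: 'a
    by (simp add: frob power_inverse)
  have qm1: "q = Suc (q - 1)" using q2 by simp
  show ?thesis
  proof (intro equalityI subsetI)
    fix y assume "y \<in> ?P ` Fq q"
    then obtain x where x: "x ^ q = x" and y: "y = ?P x" by (auto simp: Fq_def)
    obtain u :: 'a where u0: "u \<noteq> 0" and xu: "x = u + inverse u" using quad_root by blast
    have yu: "y = u ^ k + inverse (u ^ k)" using y xu dickson_eval[OF u0] by (simp add: power_inverse)
    have "u ^ q + inverse (u ^ q) = u + inverse u" using x xu fq by simp
    hence cs: "u ^ q = u \<or> u ^ q * u = 1" using sym_cases[of u "u ^ q"] u0 by simp
    have uk0: "u ^ k \<noteq> 0" using u0 by simp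
    show "y \<in> mu_sym ((q - 1) div r) \<union> mu_sym ((q + 1) div s)"
      using cs
    proof
      assume "u ^ q = u"
      hence "u * u ^ (q - 1) = u * 1" using qm1 by (metis mult.right_neutral power_Suc)
      hence u1: "u ^ (q - 1) = 1" using u0 by simp
      have "r dvd k" "r dvd q - 1" using assms(6) by auto
      hence "k * ((q - 1) div r) = (q - 1) * (k div r)" by (metis dvd_div_mult mult.commute div_mult_swap)
      hence "(u ^ k) ^ ((q - 1) div r) = (u ^ (q - 1)) ^ (k div r)" by (simp only: power_mult[symmetric])
      hence "(u ^ k) ^ ((q - 1) div r) = 1" using u1 by simp
      hence "u ^ k \<in> mu ((q - 1) div r)" using uk0 by (simp add: mu_def)
      thus ?thesis using yu by (auto simp: mu_sym_def)
    next
      assume "u ^ q * u = 1"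
      hence u1: "u ^ (q + 1) = 1" by (simp add: mult.commute)
      have "s dvd k" "s dvd q + 1" using assms(7) by auto
      hence "k * ((q + 1) div s) = (q + 1) * (k div s)" by (metis dvd_div_mult mult.commute div_mult_swap)
      hence "(u ^ k) ^ ((q + 1) div s) = (u ^ (q + 1)) ^ (k div s)" by (simp only: power_mult[symmetric])
      hence "(u ^ k) ^ ((q + 1) div s) = 1" using u1 by simp
      hence "u ^ k \<in> mu ((q + 1) div s)" using uk0 by (simp add: mu_def)
      thus ?thesis using yu by (auto simp: mu_sym_def)
    qed
  next
    fix y :: 'a assume "y \<in> mu_sym ((q - 1) div r) \<union> mu_sym ((q + 1) div s)"
    then obtain w :: 'a where yw: "y = w + inverse w"
      and cs: "w ^ ((q - 1) div r) = 1 \<or> w ^ ((q + 1) div s) = 1"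
      by (auto simp: mu_sym_def mu_def)
    from cs obtain u :: 'a where uk: "u ^ k = w" and uq: "u ^ q = u \<or> u ^ q = inverse u" and u0: "u \<noteq> 0"
    proof
      assume "w ^ ((q - 1) div r) = 1"
      then obtain u :: 'a where u1: "u ^ (q - 1) = 1" and uk: "u ^ k = w"
        using root_lemma[of "q - 1" k w] q2 assms(5,6) by auto
      have "u ^ q = u" using u1 qm1 by (metis mult.right_neutral power_Suc)
      moreover have "u \<noteq> 0" using u1 q2 by (cases "u = 0") (auto simp: power_0_left)
      ultimately show ?thesis using that uk by blast
    next
      assume "w ^ ((q + 1) div s) = 1"
      then obtain u :: 'a where u1: "u ^ (q + 1) = 1" and uk: "u ^ k = w"
        using root_lemma[of "q + 1" k w] q2 assms(5,7) by auto
      have "u ^ q * u = 1" using u1 by (simp add: mult.commute)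
      hence "inverse u = u ^ q" by (intro inverse_unique) (simp add: mult.commute)
      hence "u ^ q = inverse u" by simp
      moreover have "u \<noteq> 0" using u1 by (cases "u = 0") auto
      ultimately show ?thesis using that uk by blast
    qed
    define x where "x = u + inverse u"
    have "x ^ q = x" using uq unfolding x_def fq by (auto simp: add.commute)
    moreover have "?P x = y" unfolding x_def dickson_eval[OF u0] yw uk[symmetric]
      by (simp add: power_inverse)
    ultimately show "y \<in> ?P ` Fq q" by (auto simp: Fq_def)
  qed
qed

end
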